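(* Let $l$ be a positive integer such that for every $i\in\mathcal{V}$ there exist $l$ matrices in $\mathcal{M}$ (possibly repeated) whose product, in some order, has all entries of its column indexed by $i$ strictly positive, and let $w>0$ be the probability that $W_1=M_1M_2\cdots M_l$ is scrambling (i.e. $\lambda(W_1)<1$). Let $T_k=M_1M_2\cdots M_k$. Then there exist constants $\alpha,\beta$ with $0<\alpha<1$ and $0\le\beta<1$ such that for every $k\ge 8l/w$, with probability greater than $1-\alpha^k$, $\delta(T_k)\le\beta^k$.
   Context: Let $\mathcal{G}=(\mathcal{V},\mathcal{E})$ be a strongly connected directed graph with $\mathcal{V}=\{1,\dots,m\}$, with a self-loop $(i,i)\in\mathcal{E}$ at every node. Let $\mathcal{O}_i=\{j:(i,j)\in\mathcal{E}\}$ and $D_i=|\mathcal{O}_i|$. At each time step $k\ge1$ each link $(i,j)\in\mathcal{E}$ is reliable with probability $q_{ij}\in(0,1]$, independently across links and across time steps; let $X_k[i,j]=1$ if $(i,j)$ is reliable at step $k$ and $0$ otherwise. Let $n=m+|\mathcal{E}|$ and index rows/columns of $n\times n$ matrices by $\mathcal{V}\cup\mathcal{E}$. The random matrix $M_k$ is defined by: for $i\in\mathcal{V}$ and $(i,j)\in\mathcal{E}$, $M_k[i,j]=X_k[i,j]/D_i$ and $M_k[i,(i,j)]=(1-X_k[i,j])/D_i$, all other entries of row $i$ being $0$; for $(i,j)\in\mathcal{E}$, $M_k[(i,j),j]=X_k[i,j]$ and $M_k[(i,j),(i,j)]=1-X_k[i,j]$, all other entries of row $(i,j)$ being $0$. $\mathcal{M}$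 denotes the finite set of all $2^{|\mathcal{E}|}$ matrices obtainable this way. For a row stochastic matrix $A$: $\delta(A)=\max_j\max_{i_1,i_2}|A[i_1,j]-A[i_2,j]|$ and $\lambda(A)=1-\min_{i_1,i_2}\sum_j\min(A[i_1,j],A[i_2,j])$; $A$ is scrambling if $\lambda(A)<1$. *)

theory Defs
  imports Complex_Main
begin

text \<open>Index set of the n x n matrices: nodes (Inl i) and links (Inr (i,j)).\<close>
type_synonym 'a idx = "'a + ('a \<times> 'a)"
type_synonym 'a mat = "'a idx \<Rightarrow> 'a idx \<Rightarrow> real"

definition idxset :: "'a set \<Rightarrow> ('a \<times> 'a) set \<Rightarrow> 'a idx set" where
  "idxset V E = Inl ` V \<union> Inr ` E"

definition outdeg :: "('a \<times> 'a) set \<Rightarrow> 'a \<Rightarrow> nat" where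
  "outdeg E i = card {j. (i, j) \<in> E}"

text \<open>The matrix M determined by the set S of reliable links (S \<subseteq> E).\<close>
fun Mmat :: "('a \<times> 'a) set \<Rightarrow> ('a \<times> 'a) set \<Rightarrow> 'a mat" where
  "Mmat E S (Inl i) (Inl j) =
     (if (i, j) \<in> E \<and> (i, j) \<in> S then 1 / real (outdeg E i) else 0)"
| "Mmat E S (Inl i) (Inr (i', j)) =
     (if i' = i \<and> (i, j) \<in> E \<and> (i, j) \<notin> S then 1 / real (outdeg E i) else 0)"
| "Mmat E S (Inr (i, j)) (Inl j') =
     (if (i, j) \<in> E \<and> j' = j \<and> (i, j) \<in> S then 1 else 0)"
| "Mmat E S (Inr e) (Inr e') =
     (if e \<in> E \<and> e' = e \<and> e \<notin> S then 1 else 0)"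

definition mmul :: "'a idx set \<Rightarrow> 'a mat \<Rightarrow> 'a mat \<Rightarrow> 'a mat" where
  "mmul I A B = (\<lambda>x y. \<Sum>z\<in>I. A x z * B z y)"

definition mid :: "'a mat" where
  "mid = (\<lambda>x y. if x = y then 1 else 0)"

fun mprod :: "'a idx set \<Rightarrow> 'a mat list \<Rightarrow> 'a mat" where
  "mprod I [] = mid"
| "mprod I (A # As) = mmul I A (mprod I As)"

definition delta :: "'a idx set \<Rightarrow> 'a mat \<Rightarrow> real" where
  "delta I A = Max {\<bar>A i1 j - A i2 j\<bar> | j i1 i2. j \<in> I \<and> i1 \<in> I \<and> i2 \<in> I}"

definition lam :: "'a idx set \<Rightarrow> 'a mat \<Rightarrow> real" where
  "lam I A = 1 - Min {(\<Sum>j\<in>I. min (A i1 j) (A i2 j)) | i1 i2. i1 \<in> I \<and> i2 \<in> I}"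

definition scrambling :: "'a idx set \<Rightarrow> 'a mat \<Rightarrow> bool" where
  "scrambling I A \<longleftrightarrow> lam I A < 1"

definition cfgp :: "('a \<times> 'a) set \<Rightarrow> ('a \<times> 'a \<Rightarrow> real) \<Rightarrow> ('a \<times> 'a) set \<Rightarrow> real" where
  "cfgp E q S = (\<Prod>e\<in>S. q e) * (\<Prod>e\<in>E - S. 1 - q e)"

definition seqs :: "('a \<times> 'a) set \<Rightarrow> nat \<Rightarrow> ('a \<times> 'a) set list set" where
  "seqs E k = {Ss. length Ss = k \<and> (\<forall>S\<in>set Ss. S \<subseteq> E)}"

definition prob_k :: "('a \<times> 'a) set \<Rightarrow> ('a \<times> 'a \<Rightarrow> real) \<Rightarrow> nat
    \<Rightarrow> (('a \<times> 'a) set list \<Rightarrow> bool) \<Rightarrow> real" where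
  "prob_k E q k P = (\<Sum>Ss\<in>{Ss \<in> seqs E k. P Ss}. \<Prod>S\<leftarrow>Ss. cfgp E q S)"

text \<open>T_k = M_1 M_2 ... M_k for the configuration sequence Ss = [X_1,...,X_k].\<close>
definition Tprod :: "'a set \<Rightarrow> ('a \<times> 'a) set \<Rightarrow> ('a \<times> 'a) set list \<Rightarrow> 'a mat" where
  "Tprod V E Ss = mprod (idxset V E) (map (Mmat E) Ss)"

end

theory Submission
  imports Defs
begin


definition stoch :: "'a idx set \<Rightarrow> 'a mat \<Rightarrow> bool" where
  "stoch I A \<longleftrightarrow> (\<forall>x\<in>I. \<forall>y\<in>I. 0 \<le> A x y) \<and> (\<forall>x\<in>I. (\<Sum>y\<in>I. A x y) = 1)"

lemma stoch_le1:
  assumes "finite I" "stoch I A" "x \<in> I" "y \<in> I" shows "A x y \<le> 1"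
proof -
  have "A x y \<le> (\<Sum>z\<in>I. A x z)"
    using assms by (intro member_le_sum) (auto simp: stoch_def)
  thus ?thesis using assms by (simp add: stoch_def)
qed

lemma mmul_stoch:
  assumes "finite I" "stoch I A" "stoch I B" shows "stoch I (mmul I A B)"
  unfolding stoch_def
proof safe
  fix x y assume "x \<in> I" "y \<in> I"
  thus "0 \<le> mmul I A B x y" using assms unfolding mmul_def stoch_def
    by (intro sum_nonneg) auto
next
  fix x assume x: "x \<in> I"
  have "(\<Sum>y\<in>I. mmul I A B x y) = (\<Sum>y\<in>I. \<Sum>z\<in>I. A x z * B z y)"
    unfolding mmul_def ..
  also have "\<dots> = (\<Sum>z\<in>I. \<Sum>y\<in>I. A x z * B z y)" by (rule sum.swap)
  also have "\<dots> = (\<Sum>z\<in>I. A x z * (\<Sum>y\<in>I. B z y))" by (simp add: sum_distrib_left)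
  also have "\<dots> = (\<Sum>z\<in>I. A x z)" using assms(3) by (simp add: stoch_def)
  also have "\<dots> = 1" using assms(2) x by (simp add: stoch_def)
  finally show "(\<Sum>y\<in>I. mmul I A B x y) = 1" .
qed

lemma mid_stoch: "finite I \<Longrightarrow> stoch I mid"
  by (simp add: stoch_def mid_def)

lemma mprod_stoch: "finite I \<Longrightarrow> \<forall>A\<in>set As. stoch I A \<Longrightarrow> stoch I (mprod I As)"
  by (induction As) (auto simp: mid_stoch mmul_stoch)

lemma mprod_append:
  assumes "finite I" shows "\<forall>x\<in>I. \<forall>y\<in>I. mprod I (As @ Bs) x y = mmul I (mprod I As) (mprod I Bs) x y"
proof (induction As)
  case Nil
  show ?case
  proof (intro ballI)
    fix x y assume x: "x \<in> I" and y: "y \<in> I"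
    have "mmul I (mprod I []) (mprod I Bs) x y = (\<Sum>z\<in>I. if x = z then mprod I Bs z y else 0)"
      unfolding mmul_def by (rule sum.cong) (auto simp: mid_def)
    also have "\<dots> = mprod I Bs x y" using x assms by simp
    finally show "mprod I ([] @ Bs) x y = mmul I (mprod I []) (mprod I Bs) x y" by simp
  qed
next
  case (Cons A As)
  show ?case
  proof (intro ballI)
    fix x y assume x: "x \<in> I" and y: "y \<in> I"
    have "mprod I ((A # As) @ Bs) x y = (\<Sum>z\<in>I. A x z * mmul I (mprod I As) (mprod I Bs) z y)"
      using Cons y by (simp add: mmul_def)
    also have "\<dots> = (\<Sum>z\<in>I. \<Sum>w\<in>I. A x z * (mprod I As z w * mprod I Bs w y))"
      by (simp add: mmul_def sum_distrib_left)
    also have "\<dots> = (\<Sum>w\<in>I. \<Sum>z\<in>I. A x z * (mprod I As z w * mprod I Bs w y))" by (rule sum.swap)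
    also have "\<dots> = mmul I (mprod I (A # As)) (mprod I Bs) x y"
      by (simp add: mmul_def sum_distrib_right mult.assoc)
    finally show "mprod I ((A # As) @ Bs) x y = mmul I (mprod I (A # As)) (mprod I Bs) x y" .
  qed
qed


lemma delta_set_eq: "{\<bar>A i1 j - A i2 j\<bar> | j i1 i2. j \<in> I \<and> i1 \<in> I \<and> i2 \<in> I}
   = (\<lambda>(j,i1,i2). \<bar>A i1 j - A i2 j\<bar>) ` (I \<times> I \<times> I)"
  by (auto simp: image_iff) blast

lemma lam_set_eq: "{(\<Sum>j\<in>I. min (A i1 j) (A i2 j)) | i1 i2. i1 \<in> I \<and> i2 \<in> I}
   = (\<lambda>(i1,i2). \<Sum>j\<in>I. min (A i1 j) (A i2 j)) ` (I \<times> I)"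
  by auto

lemma delta_cong: assumes "\<forall>x\<in>I. \<forall>y\<in>I. A x y = B x y" shows "delta I A = delta I B"
proof -
  have "(\<lambda>(j,i1,i2). \<bar>A i1 j - A i2 j\<bar>) ` (I \<times> I \<times> I) = (\<lambda>(j,i1,i2). \<bar>B i1 j - B i2 j\<bar>) ` (I \<times> I \<times> I)"
  proof (rule image_cong[OF refl])
    fix t assume "t \<in> I \<times> I \<times> I"
    then obtain j i1 i2 where "t = (j,i1,i2)" "j \<in> I" "i1 \<in> I" "i2 \<in> I" by auto
    thus "(\<lambda>(j,i1,i2). \<bar>A i1 j - A i2 j\<bar>) t = (\<lambda>(j,i1,i2). \<bar>B i1 j - B i2 j\<bar>) t" using assms by simp
  qed
  thus ?thesis unfolding delta_def delta_set_eq by simp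
qed

lemma delta_ge:
  assumes "finite I" "j \<in> I" "i1 \<in> I" "i2 \<in> I"
  shows "\<bar>A i1 j - A i2 j\<bar> \<le> delta I A"
proof -
  let ?S = "(\<lambda>(j,i1,i2). \<bar>A i1 j - A i2 j\<bar>) ` (I \<times> I \<times> I)"
  have "(\<lambda>(j,i1,i2). \<bar>A i1 j - A i2 j\<bar>) (j,i1,i2) \<in> ?S" by (rule imageI) (use assms in auto)
  hence "\<bar>A i1 j - A i2 j\<bar> \<le> Max ?S" using assms by (intro Max_ge) auto
  thus ?thesis unfolding delta_def delta_set_eq .
qed

lemma delta_bounds:
  assumes "finite I" "I \<noteq> {}" "stoch I A"
  shows "0 \<le> delta I A" "delta I A \<le> 1"
proof -
  obtain i where i: "i \<in> I" using assms by auto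
  show "0 \<le> delta I A" using delta_ge[OF assms(1) i i i, of A] by simp
  let ?S = "(\<lambda>(j,i1,i2). \<bar>A i1 j - A i2 j\<bar>) ` (I \<times> I \<times> I)"
  have fin: "finite ?S" using assms by simp
  have ne: "?S \<noteq> {}" using assms by simp
  have all: "\<forall>a\<in>?S. a \<le> 1"
  proof
    fix a assume "a \<in> ?S"
    then obtain j i1 i2 where h: "j \<in> I" "i1 \<in> I" "i2 \<in> I" and aeq: "a = \<bar>A i1 j - A i2 j\<bar>" by auto
    have "0 \<le> A i1 j" "0 \<le> A i2 j" using h assms(3) by (auto simp: stoch_def)
    moreover have "A i1 j \<le> 1" "A i2 j \<le> 1" using h assms stoch_le1 by blast+
    ultimately show "a \<le> 1" using aeq by simp
  qed
  show "delta I A \<le> 1" unfolding delta_def delta_set_eq using Max_le_iff[OF fin ne] all by blast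
qed

lemma lam_ge:
  assumes "finite I" "i1 \<in> I" "i2 \<in> I"
  shows "1 - (\<Sum>j\<in>I. min (A i1 j) (A i2 j)) \<le> lam I A"
proof -
  let ?S = "(\<lambda>(i1,i2). \<Sum>j\<in>I. min (A i1 j) (A i2 j)) ` (I \<times> I)"
  have "(\<lambda>(i1,i2). \<Sum>j\<in>I. min (A i1 j) (A i2 j)) (i1,i2) \<in> ?S" by (rule imageI) (use assms in auto)
  hence "Min ?S \<le> (\<Sum>j\<in>I. min (A i1 j) (A i2 j))" using assms by (intro Min_le) auto
  thus ?thesis unfolding lam_def lam_set_eq by simp
qed

lemma lam_bounds:
  assumes "finite I" "I \<noteq> {}" "stoch I A"
  shows "0 \<le> lam I A" "lam I A \<le> 1"
proof -
  obtain i where i: "i \<in> I" using assms by auto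
  have "(\<Sum>j\<in>I. min (A i j) (A i j)) = 1" using assms(3) i by (simp add: stoch_def)
  thus "0 \<le> lam I A" using lam_ge[OF assms(1) i i, of A] by simp
  let ?S = "(\<lambda>(i1,i2). \<Sum>j\<in>I. min (A i1 j) (A i2 j)) ` (I \<times> I)"
  have fin: "finite ?S" using assms by simp
  have ne: "?S \<noteq> {}" using assms by simp
  have all: "\<forall>a\<in>?S. 0 \<le> a"
  proof
    fix a assume "a \<in> ?S"
    then obtain i1 i2 where h: "i1 \<in> I" "i2 \<in> I" and aeq: "a = (\<Sum>j\<in>I. min (A i1 j) (A i2 j))" by auto
    have "0 \<le> (\<Sum>j\<in>I. min (A i1 j) (A i2 j))" using h assms(3) by (intro sum_nonneg) (auto simp: stoch_def)
    thus "0 \<le> a" using aeq by simp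
  qed
  have "0 \<le> Min ?S" using Min_ge_iff[OF fin ne] all by blast
  thus "lam I A \<le> 1" unfolding lam_def lam_set_eq by simp
qed

lemma one_side:
  assumes "finite I" "stoch I A" "i1 \<in> I" "i2 \<in> I"
    and M: "\<forall>z\<in>I. x z \<le> M" and m: "\<forall>z\<in>I. m \<le> x z"
  shows "(\<Sum>z\<in>I. A i1 z * x z) - (\<Sum>z\<in>I. A i2 z * x z)
      \<le> (1 - (\<Sum>z\<in>I. min (A i1 z) (A i2 z))) * (M - m)"
proof -
  define c where "c z = min (A i1 z) (A i2 z)" for z
  have s1: "(\<Sum>z\<in>I. A i1 z) = 1" "(\<Sum>z\<in>I. A i2 z) = 1" using assms by (auto simp: stoch_def)
  have h1: "(\<Sum>z\<in>I. A i1 z * x z) \<le> (\<Sum>z\<in>I. c z * x z + (A i1 z - c z) * M)"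
  proof (rule sum_mono)
    fix z assume "z \<in> I"
    hence "0 \<le> (A i1 z - c z) * (M - x z)" using M by (intro mult_nonneg_nonneg) (auto simp: c_def)
    thus "A i1 z * x z \<le> c z * x z + (A i1 z - c z) * M" by (simp add: algebra_simps)
  qed
  have h2: "(\<Sum>z\<in>I. c z * x z + (A i2 z - c z) * m) \<le> (\<Sum>z\<in>I. A i2 z * x z)"
  proof (rule sum_mono)
    fix z assume "z \<in> I"
    hence "0 \<le> (A i2 z - c z) * (x z - m)" using m by (intro mult_nonneg_nonneg) (auto simp: c_def)
    thus "c z * x z + (A i2 z - c z) * m \<le> A i2 z * x z" by (simp add: algebra_simps)
  qed
  have e1: "(\<Sum>z\<in>I. c z * x z + (A i1 z - c z) * M) = (\<Sum>z\<in>I. c z * x z) + (1 - sum c I) * M"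
    using s1 by (simp add: sum.distrib sum_distrib_right[symmetric] sum_subtractf)
  have e2: "(\<Sum>z\<in>I. c z * x z + (A i2 z - c z) * m) = (\<Sum>z\<in>I. c z * x z) + (1 - sum c I) * m"
    using s1 by (simp add: sum.distrib sum_distrib_right[symmetric] sum_subtractf)
  show ?thesis using h1 h2 e1 e2 unfolding c_def by (simp add: algebra_simps)
qed

lemma delta_mmul:
  assumes "finite I" "I \<noteq> {}" "stoch I A" "stoch I B"
  shows "delta I (mmul I A B) \<le> lam I A * delta I B"
proof -
  let ?S = "(\<lambda>(j,i1,i2). \<bar>mmul I A B i1 j - mmul I A B i2 j\<bar>) ` (I \<times> I \<times> I)"
  have fin: "finite ?S" using assms by simp
  have ne: "?S \<noteq> {}" using assms by simp
  have all: "\<forall>a\<in>?S. a \<le> lam I A * delta I B"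
  proof
    fix a assume "a \<in> ?S"
    then obtain j i1 i2 where h: "j \<in> I" "i1 \<in> I" "i2 \<in> I" and aeq: "a = \<bar>mmul I A B i1 j - mmul I A B i2 j\<bar>" by auto
    define x where "x z = B z j" for z
    define M where "M = Max (x ` I)"
    define m where "m = Min (x ` I)"
    have fI: "finite (x ` I)" and nI: "x ` I \<noteq> {}" using assms by auto
    have Min: "M \<in> x ` I" "m \<in> x ` I" unfolding M_def m_def using Max_in[OF fI nI] Min_in[OF fI nI] by auto
    then obtain z1 z2 where z: "z1 \<in> I" "z2 \<in> I" "M = x z1" "m = x z2" by blast
    have Mb: "\<forall>z\<in>I. x z \<le> M" unfolding M_def using Max_ge[OF fI] by blast
    have mb: "\<forall>z\<in>I. m \<le> x z" unfolding m_def using Min_le[OF fI] by blast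
    have dM: "M - m \<le> delta I B" using delta_ge[OF assms(1) h(1) z(1,2), of B] z by (simp add: x_def)
    have "x z2 \<le> M" using Mb z(2) by blast
    hence dM0: "0 \<le> M - m" using z(4) by simp
    have l1: "1 - (\<Sum>z\<in>I. min (A i1 z) (A i2 z)) \<le> lam I A" by (rule lam_ge[OF assms(1) h(2,3)])
    have l2: "1 - (\<Sum>z\<in>I. min (A i2 z) (A i1 z)) \<le> lam I A" by (rule lam_ge[OF assms(1) h(3,2)])
    have p1: "0 \<le> 1 - (\<Sum>z\<in>I. min (A i1 z) (A i2 z))"
    proof -
      have "(\<Sum>z\<in>I. min (A i1 z) (A i2 z)) \<le> (\<Sum>z\<in>I. A i1 z)" by (intro sum_mono) auto
      thus ?thesis using assms h by (simp add: stoch_def)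
    qed
    have p2: "0 \<le> 1 - (\<Sum>z\<in>I. min (A i2 z) (A i1 z))"
    proof -
      have "(\<Sum>z\<in>I. min (A i2 z) (A i1 z)) \<le> (\<Sum>z\<in>I. A i2 z)" by (intro sum_mono) auto
      thus ?thesis using assms h by (simp add: stoch_def)
    qed
    have a: "mmul I A B i1 j - mmul I A B i2 j \<le> lam I A * delta I B"
    proof -
      have "mmul I A B i1 j - mmul I A B i2 j \<le> (1 - (\<Sum>z\<in>I. min (A i1 z) (A i2 z))) * (M - m)"
        using one_side[OF assms(1,3) h(2,3) Mb mb] by (simp add: mmul_def x_def)
      also have "\<dots> \<le> lam I A * delta I B" by (rule mult_mono[OF l1 dM _ dM0]) (use l1 p1 in linarith)
      finally show ?thesis .
    qed
    have b: "mmul I A B i2 j - mmul I A B i1 j \<le> lam I A * delta I B"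
    proof -
      have "mmul I A B i2 j - mmul I A B i1 j \<le> (1 - (\<Sum>z\<in>I. min (A i2 z) (A i1 z))) * (M - m)"
        using one_side[OF assms(1,3) h(3,2) Mb mb] by (simp add: mmul_def x_def)
      also have "\<dots> \<le> lam I A * delta I B" by (rule mult_mono[OF l2 dM _ dM0]) (use l2 p2 in linarith)
      finally show ?thesis .
    qed
    show "a \<le> lam I A * delta I B" using a b aeq by simp
  qed
  show ?thesis unfolding delta_def[of I "mmul I A B"] delta_set_eq using Max_le_iff[OF fin ne] all by blast
qed




lemma sum_idx:
  assumes "finite V" "finite E"
  shows "sum f (idxset V E) = (\<Sum>i\<in>V. f (Inl i)) + (\<Sum>e\<in>E. f (Inr e))"
proof -
  have "sum f (idxset V E) = sum f (Inl ` V) + sum f (Inr ` E)"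
    unfolding idxset_def using assms by (intro sum.union_disjoint) auto
  also have "sum f (Inl ` V) = (\<Sum>i\<in>V. f (Inl i))" by (simp add: sum.reindex)
  also have "sum f (Inr ` E) = (\<Sum>e\<in>E. f (Inr e))" by (simp add: sum.reindex)
  finally show ?thesis .
qed

lemma Mmat_nonneg: "0 \<le> Mmat E S x y"
  by (induction E S x y rule: Mmat.induct) auto

lemma Mmat_stoch:
  assumes finV: "finite V" and EV: "E \<subseteq> V \<times> V" and loops: "\<forall>i\<in>V. (i, i) \<in> E" and SE: "S \<subseteq> E"
  shows "stoch (idxset V E) (Mmat E S)"
proof -
  have finE: "finite E" using finV EV finite_subset by blast
  have rows: "(\<Sum>y\<in>idxset V E. Mmat E S x y) = 1" if x: "x \<in> idxset V E" for x
  proof (cases x)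
    case (Inl i)
    with x have iV: "i \<in> V" by (auto simp: idxset_def)
    define N where "N = {j. (i, j) \<in> E}"
    have NV: "N \<subseteq> V" using EV by (auto simp: N_def)
    have finN: "finite N" using NV finV finite_subset by blast
    have iN: "i \<in> N" using loops iV by (auto simp: N_def)
    define d where "d = real (outdeg E i)"
    have dpos: "d > 0" unfolding d_def outdeg_def N_def[symmetric] using finN iN card_gt_0_iff by auto
    have dN: "d = real (card N)" by (simp add: d_def outdeg_def N_def)
    have s1: "(\<Sum>j\<in>V. Mmat E S (Inl i) (Inl j)) = (\<Sum>j\<in>N. if (i, j) \<in> S then 1 / d else 0)"
    proof -
      have "(\<Sum>j\<in>V. Mmat E S (Inl i) (Inl j)) = (\<Sum>j\<in>V. if j \<in> N then (if (i, j) \<in> S then 1 / d else 0) else 0)"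
        by (rule sum.cong) (auto simp: N_def d_def)
      also have "\<dots> = (\<Sum>j\<in>{j\<in>V. j \<in> N}. if (i, j) \<in> S then 1 / d else 0)"
        using finV by (simp add: sum.inter_filter)
      also have "{j\<in>V. j \<in> N} = N" using NV by auto
      finally show ?thesis .
    qed
    have s2: "(\<Sum>e\<in>E. Mmat E S (Inl i) (Inr e)) = (\<Sum>j\<in>N. if (i, j) \<in> S then 0 else 1 / d)"
    proof -
      have "(\<Sum>e\<in>E. Mmat E S (Inl i) (Inr e)) = (\<Sum>e\<in>E. if fst e = i then (if e \<in> S then 0 else 1 / d) else 0)"
        by (rule sum.cong) (auto simp: d_def)
      also have "\<dots> = (\<Sum>e\<in>{e\<in>E. fst e = i}. if e \<in> S then 0 else 1 / d)"
        using finE by (simp add: sum.inter_filter)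
      also have "{e\<in>E. fst e = i} = Pair i ` N" by (auto simp: N_def)
      also have "(\<Sum>e\<in>Pair i ` N. if e \<in> S then 0 else 1 / d) = (\<Sum>j\<in>N. if (i, j) \<in> S then 0 else 1 / d)"
        by (subst sum.reindex) (auto simp: inj_on_def)
      finally show ?thesis .
    qed
    have "(\<Sum>y\<in>idxset V E. Mmat E S x y) = (\<Sum>j\<in>V. Mmat E S (Inl i) (Inl j)) + (\<Sum>e\<in>E. Mmat E S (Inl i) (Inr e))"
      using sum_idx[OF finV finE, of "Mmat E S x"] Inl by simp
    also have "\<dots> = (\<Sum>j\<in>N. (if (i, j) \<in> S then 1 / d else 0) + (if (i, j) \<in> S then 0 else 1 / d))"
      unfolding s1 s2 by (simp add: sum.distrib)
    also have "\<dots> = (\<Sum>j\<in>N. 1 / d)" by (rule sum.cong) auto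
    also have "\<dots> = 1" using dpos dN by simp
    finally show ?thesis .
  next
    case (Inr e)
    obtain a b where e: "e = (a, b)" by (cases e)
    with x Inr have eE: "(a, b) \<in> E" by (auto simp: idxset_def)
    hence bV: "b \<in> V" using EV by auto
    have s1: "(\<Sum>j\<in>V. Mmat E S (Inr (a, b)) (Inl j)) = (\<Sum>j\<in>V. if j = b then (if (a, b) \<in> S then 1 else 0) else 0)"
      by (rule sum.cong) (use eE in auto)
    have s2: "(\<Sum>e'\<in>E. Mmat E S (Inr (a, b)) (Inr e')) = (\<Sum>e'\<in>E. if e' = (a, b) then (if (a, b) \<in> S then 0 else 1) else 0)"
      by (rule sum.cong) (use eE in auto)
    have s1': "(\<Sum>j\<in>V. if j = b then (if (a, b) \<in> S then 1 else 0) else 0) = (if (a, b) \<in> S then 1 else (0::real))"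
      using finV bV by (simp only: sum.delta) simp
    have s2': "(\<Sum>e'\<in>E. if e' = (a, b) then (if (a, b) \<in> S then 0 else 1) else 0) = (if (a, b) \<in> S then 0 else (1::real))"
      using finE eE by (simp only: sum.delta) simp
    have "(\<Sum>y\<in>idxset V E. Mmat E S x y) = (\<Sum>j\<in>V. Mmat E S (Inr (a, b)) (Inl j)) + (\<Sum>e'\<in>E. Mmat E S (Inr (a, b)) (Inr e'))"
      using sum_idx[OF finV finE, of "Mmat E S x"] Inr e by simp
    also have "\<dots> = 1" unfolding s1 s2 s1' s2' by simp
    finally show ?thesis .
  qed
  show ?thesis unfolding stoch_def using rows Mmat_nonneg by blast
qed



abbreviation pw :: "('a \<times> 'a) set \<Rightarrow> ('a \<times> 'a \<Rightarrow> real) \<Rightarrow> ('a \<times> 'a) set list \<Rightarrow> real" where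
  "pw E q Ss \<equiv> (\<Prod>S\<leftarrow>Ss. cfgp E q S)"

lemma seqs_eq: "seqs E k = {xs. set xs \<subseteq> Pow E \<and> length xs = k}"
  unfolding seqs_def by auto

lemma finite_seqs: "finite E \<Longrightarrow> finite (seqs E k)"
  unfolding seqs_eq by (intro finite_lists_length_eq) simp

lemma cfgp_nonneg:
  assumes "S \<subseteq> E" "\<forall>e\<in>E. 0 < q e \<and> q e \<le> 1" shows "0 \<le> cfgp E q S"
proof -
  have h: "\<forall>e\<in>E. 0 \<le> q e \<and> 0 \<le> 1 - q e" using assms(2) by force
  show ?thesis unfolding cfgp_def using h assms(1) by (intro mult_nonneg_nonneg prod_nonneg) auto
qed

lemma pw_nonneg: "Ss \<in> seqs E k \<Longrightarrow> \<forall>e\<in>E. 0 < q e \<and> q e \<le> 1 \<Longrightarrow> 0 \<le> pw E q Ss"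
  by (intro prod_list_nonneg) (auto simp: seqs_def intro: cfgp_nonneg)

lemma seqs_add: "seqs E (a + b) = (\<lambda>(x, y). x @ y) ` (seqs E a \<times> seqs E b)"
proof (rule set_eqI)
  fix Ss
  show "Ss \<in> seqs E (a + b) \<longleftrightarrow> Ss \<in> (\<lambda>(x, y). x @ y) ` (seqs E a \<times> seqs E b)"
  proof
    assume h: "Ss \<in> seqs E (a + b)"
    have "take a Ss \<in> seqs E a" "drop a Ss \<in> seqs E b" using h
      by (auto simp: seqs_def dest: in_set_takeD in_set_dropD)
    moreover have "Ss = (\<lambda>(x, y). x @ y) (take a Ss, drop a Ss)" by simp
    ultimately show "Ss \<in> (\<lambda>(x, y). x @ y) ` (seqs E a \<times> seqs E b)" by blast
  next
    assume "Ss \<in> (\<lambda>(x, y). x @ y) ` (seqs E a \<times> seqs E b)"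
    thus "Ss \<in> seqs E (a + b)" unfolding seqs_def by fastforce
  qed
qed

lemma inj_app: "inj_on (\<lambda>(x, y). x @ y) (seqs E a \<times> seqs E b)"
  unfolding inj_on_def seqs_def by auto

lemma sum_split:
  assumes "finite E"
  shows "(\<Sum>Ss\<in>seqs E (a + b). pw E q Ss * (f (take a Ss) * g (drop a Ss)))
       = (\<Sum>x\<in>seqs E a. pw E q x * f x) * (\<Sum>y\<in>seqs E b. pw E q y * g y)"
proof -
  have "(\<Sum>Ss\<in>seqs E (a + b). pw E q Ss * (f (take a Ss) * g (drop a Ss)))
      = (\<Sum>t\<in>seqs E a \<times> seqs E b. pw E q (fst t @ snd t) * (f (take a (fst t @ snd t)) * g (drop a (fst t @ snd t))))"
    unfolding seqs_add by (subst sum.reindex[OF inj_app]) (simp add: case_prod_beta)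
  also have "\<dots> = (\<Sum>t\<in>seqs E a \<times> seqs E b. (pw E q (fst t) * f (fst t)) * (pw E q (snd t) * g (snd t)))"
  proof (rule sum.cong[OF refl])
    fix t assume "t \<in> seqs E a \<times> seqs E b"
    hence "length (fst t) = a" by (auto simp: seqs_def)
    thus "pw E q (fst t @ snd t) * (f (take a (fst t @ snd t)) * g (drop a (fst t @ snd t)))
        = (pw E q (fst t) * f (fst t)) * (pw E q (snd t) * g (snd t))" by simp
  qed
  also have "\<dots> = (\<Sum>x\<in>seqs E a. pw E q x * f x) * (\<Sum>y\<in>seqs E b. pw E q y * g y)"
    by (simp add: sum_product sum.cartesian_product case_prod_beta)
  finally show ?thesis .
qed

lemma seqs_one: "seqs E 1 = (\<lambda>S. [S]) ` Pow E"
  unfolding seqs_def by (auto simp: length_Suc_conv)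

lemma cfgp_total:
  assumes "finite E" shows "(\<Sum>S\<in>Pow E. cfgp E q S) = 1"
proof -
  have "(\<Prod>e\<in>E. q e + (1 - q e)) = (\<Sum>S\<in>Pow E. (\<Prod>e\<in>S. q e) * (\<Prod>e\<in>E - S. 1 - q e))"
    by (rule prod_add[OF assms])
  thus ?thesis unfolding cfgp_def by simp
qed

lemma pw_total:
  assumes "finite E" shows "(\<Sum>Ss\<in>seqs E k. pw E q Ss) = 1"
proof (induction k)
  case 0
  have "seqs E 0 = {[]}" by (auto simp: seqs_def)
  thus ?case by simp
next
  case (Suc k)
  have "(\<Sum>Ss\<in>seqs E (1 + k). pw E q Ss * ((\<lambda>_. 1) (take 1 Ss) * (\<lambda>_. 1) (drop 1 Ss)))
      = (\<Sum>x\<in>seqs E 1. pw E q x * 1) * (\<Sum>y\<in>seqs E k. pw E q y * 1)"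
    by (rule sum_split[OF assms])
  moreover have "(\<Sum>x\<in>seqs E 1. pw E q x) = 1"
    unfolding seqs_one by (subst sum.reindex) (auto simp: inj_on_def cfgp_total[OF assms])
  ultimately show ?case using Suc by simp
qed

lemma prob_k_alt:
  assumes "finite E"
  shows "prob_k E q k P = (\<Sum>Ss\<in>seqs E k. if P Ss then pw E q Ss else 0)"
  unfolding prob_k_def using finite_seqs[OF assms] by (simp add: sum.inter_filter)

lemma prob_compl:
  assumes "finite E"
  shows "prob_k E q k P = 1 - prob_k E q k (\<lambda>Ss. \<not> P Ss)"
proof -
  have "prob_k E q k P + prob_k E q k (\<lambda>Ss. \<not> P Ss) = (\<Sum>Ss\<in>seqs E k. pw E q Ss)"
    unfolding prob_k_alt[OF assms] sum.distrib[symmetric] by (rule sum.cong) auto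
  thus ?thesis using pw_total[OF assms] by simp
qed

lemma prob_le1:
  assumes "finite E" "\<forall>e\<in>E. 0 < q e \<and> q e \<le> 1"
  shows "prob_k E q k P \<le> 1"
proof -
  have "prob_k E q k P \<le> (\<Sum>Ss\<in>seqs E k. pw E q Ss)"
    unfolding prob_k_alt[OF assms(1)] by (rule sum_mono) (use pw_nonneg assms(2) in auto)
  thus ?thesis using pw_total[OF assms(1)] by simp
qed



lemma finite_idx: "finite V \<Longrightarrow> finite E \<Longrightarrow> finite (idxset V E)"
  unfolding idxset_def by simp

lemma idx_ne: "V \<noteq> {} \<Longrightarrow> idxset V E \<noteq> {}"
  unfolding idxset_def by simp

lemma T_stoch:
  assumes "finite V" "E \<subseteq> V \<times> V" "\<forall>i\<in>V. (i, i) \<in> E" "Ss \<in> seqs E k"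
  shows "stoch (idxset V E) (Tprod V E Ss)"
proof -
  have finE: "finite E" using assms(1,2) finite_subset by blast
  show ?thesis unfolding Tprod_def
    using assms(4) by (intro mprod_stoch finite_idx assms(1) finE)
      (auto simp: seqs_def intro!: Mmat_stoch[OF assms(1,2,3)])
qed

lemma delta_split:
  assumes fV: "finite V" and ne: "V \<noteq> {}" and EV: "E \<subseteq> V \<times> V" and lo: "\<forall>i\<in>V. (i, i) \<in> E"
    and Ss: "Ss \<in> seqs E (l + m)"
  shows "delta (idxset V E) (Tprod V E Ss)
     \<le> lam (idxset V E) (Tprod V E (take l Ss)) * delta (idxset V E) (Tprod V E (drop l Ss))"
proof -
  let ?I = "idxset V E"
  have finE: "finite E" using fV EV finite_subset by blast
  have fI: "finite ?I" by (rule finite_idx[OF fV finE])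
  have t: "take l Ss \<in> seqs E l" and d: "drop l Ss \<in> seqs E m" using Ss
    by (auto simp: seqs_def dest: in_set_takeD in_set_dropD)
  have eq: "\<forall>x\<in>?I. \<forall>y\<in>?I. Tprod V E Ss x y = mmul ?I (Tprod V E (take l Ss)) (Tprod V E (drop l Ss)) x y"
  proof -
    have "Tprod V E Ss = mprod ?I (map (Mmat E) (take l Ss) @ map (Mmat E) (drop l Ss))"
      unfolding Tprod_def by (simp flip: map_append)
    thus ?thesis using mprod_append[OF fI] unfolding Tprod_def by simp
  qed
  have "delta ?I (Tprod V E Ss) = delta ?I (mmul ?I (Tprod V E (take l Ss)) (Tprod V E (drop l Ss)))"
    by (rule delta_cong[OF eq])
  also have "\<dots> \<le> lam ?I (Tprod V E (take l Ss)) * delta ?I (Tprod V E (drop l Ss))"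
    by (rule delta_mmul[OF fI idx_ne[OF ne] T_stoch[OF fV EV lo t] T_stoch[OF fV EV lo d]])
  finally show ?thesis .
qed

lemma Dbound:
  assumes fV: "finite V" and ne: "V \<noteq> {}" and EV: "E \<subseteq> V \<times> V" and lo: "\<forall>i\<in>V. (i, i) \<in> E"
    and qpos: "\<forall>e\<in>E. 0 < q e \<and> q e \<le> 1"
  shows "(\<Sum>Ss\<in>seqs E (n * l + m). pw E q Ss * delta (idxset V E) (Tprod V E Ss))
     \<le> (\<Sum>Ss\<in>seqs E l. pw E q Ss * lam (idxset V E) (Tprod V E Ss)) ^ n"
proof (induction n arbitrary: m)
  let ?I = "idxset V E"
  have finE: "finite E" using fV EV finite_subset by blast
  have fI: "finite ?I" by (rule finite_idx[OF fV finE])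
  {
    case 0
    have "(\<Sum>Ss\<in>seqs E m. pw E q Ss * delta ?I (Tprod V E Ss)) \<le> (\<Sum>Ss\<in>seqs E m. pw E q Ss)"
    proof (rule sum_mono)
      fix Ss assume h: "Ss \<in> seqs E m"
      have "delta ?I (Tprod V E Ss) \<le> 1"
        by (rule delta_bounds(2)[OF fI idx_ne[OF ne] T_stoch[OF fV EV lo h]])
      thus "pw E q Ss * delta ?I (Tprod V E Ss) \<le> pw E q Ss"
        using pw_nonneg[OF h qpos] by (simp add: mult_left_le)
    qed
    thus ?case using pw_total[OF finE] by simp
  next
    case (Suc n)
    define \<rho> where "\<rho> = (\<Sum>Ss\<in>seqs E l. pw E q Ss * lam ?I (Tprod V E Ss))"
    have rho0: "0 \<le> \<rho>" unfolding \<rho>_def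
      by (intro sum_nonneg mult_nonneg_nonneg pw_nonneg[OF _ qpos] lam_bounds(1)[OF fI idx_ne[OF ne] T_stoch[OF fV EV lo]])
    have "(\<Sum>Ss\<in>seqs E (Suc n * l + m). pw E q Ss * delta ?I (Tprod V E Ss))
        = (\<Sum>Ss\<in>seqs E (l + (n * l + m)). pw E q Ss * delta ?I (Tprod V E Ss))"
      by (simp add: add.assoc)
    also have "\<dots> \<le> (\<Sum>Ss\<in>seqs E (l + (n * l + m)). pw E q Ss *
        (lam ?I (Tprod V E (take l Ss)) * delta ?I (Tprod V E (drop l Ss))))"
    proof (rule sum_mono)
      fix Ss assume h: "Ss \<in> seqs E (l + (n * l + m))"
      show "pw E q Ss * delta ?I (Tprod V E Ss) \<le> pw E q Ss *
        (lam ?I (Tprod V E (take l Ss)) * delta ?I (Tprod V E (drop l Ss)))"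
        by (rule mult_left_mono[OF delta_split[OF fV ne EV lo h] pw_nonneg[OF h qpos]])
    qed
    also have "\<dots> = \<rho> * (\<Sum>Ss\<in>seqs E (n * l + m). pw E q Ss * delta ?I (Tprod V E Ss))"
      unfolding \<rho>_def by (rule sum_split[OF finE])
    also have "\<dots> \<le> \<rho> * \<rho> ^ n"
      using Suc.IH unfolding \<rho>_def[symmetric] by (intro mult_left_mono rho0)
    finally show ?case unfolding \<rho>_def by simp
  }
qed



theorem lemma2:
  fixes V :: "'a set" and E :: "('a \<times> 'a) set" and q :: "'a \<times> 'a \<Rightarrow> real" and l :: nat
  assumes finV: "finite V" and neV: "V \<noteq> {}"
    and EV: "E \<subseteq> V \<times> V"
    and strong: "\<forall>i\<in>V. \<forall>j\<in>V. (i, j) \<in> E\<^sup>*"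
    and loops: "\<forall>i\<in>V. (i, i) \<in> E"
    and qpos: "\<forall>e\<in>E. 0 < q e \<and> q e \<le> 1"
    and lpos: "0 < l"
    and col: "\<forall>i\<in>V. \<exists>Ss. length Ss = l \<and> (\<forall>S\<in>set Ss. S \<subseteq> E) \<and>
                 (\<forall>r\<in>idxset V E. Tprod V E Ss r (Inl i) > 0)"
    and wpos: "prob_k E q l (\<lambda>Ss. scrambling (idxset V E) (Tprod V E Ss)) > 0"
  shows "\<exists>\<alpha> \<beta>::real. 0 < \<alpha> \<and> \<alpha> < 1 \<and> 0 \<le> \<beta> \<and> \<beta> < 1 \<and>
           (\<forall>k::nat. real k \<ge> 8 * real l /
                        prob_k E q l (\<lambda>Ss. scrambling (idxset V E) (Tprod V E Ss)) \<longrightarrow>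
              prob_k E q k (\<lambda>Ss. delta (idxset V E) (Tprod V E Ss) \<le> \<beta> ^ k) > 1 - \<alpha> ^ k)"
proof -
  let ?I = "idxset V E"
  have finE: "finite E" using finV EV finite_subset by blast
  have fI: "finite ?I" by (rule finite_idx[OF finV finE])
  have Ine: "?I \<noteq> {}" by (rule idx_ne[OF neV])
  define w where "w = prob_k E q l (\<lambda>Ss. scrambling ?I (Tprod V E Ss))"
  have w0: "0 < w" using wpos unfolding w_def .
  have w1: "w \<le> 1" unfolding w_def by (rule prob_le1[OF finE qpos])
  define \<rho> where "\<rho> = (\<Sum>Ss\<in>seqs E l. pw E q Ss * lam ?I (Tprod V E Ss))"
  have lam0: "\<And>Ss k. Ss \<in> seqs E k \<Longrightarrow> 0 \<le> lam ?I (Tprod V E Ss)"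
    by (rule lam_bounds(1)[OF fI Ine T_stoch[OF finV EV loops]])
  have lam1: "\<And>Ss k. Ss \<in> seqs E k \<Longrightarrow> lam ?I (Tprod V E Ss) \<le> 1"
    by (rule lam_bounds(2)[OF fI Ine T_stoch[OF finV EV loops]])
  have rho0: "0 \<le> \<rho>" unfolding \<rho>_def
    by (intro sum_nonneg mult_nonneg_nonneg pw_nonneg[OF _ qpos] lam0)
  obtain S0 where S0: "S0 \<in> seqs E l" "scrambling ?I (Tprod V E S0)" "0 < pw E q S0"
  proof (rule ccontr)
    assume "\<not> thesis"
    hence "\<forall>Ss\<in>{Ss \<in> seqs E l. scrambling ?I (Tprod V E Ss)}. pw E q Ss \<le> 0"
      using that by force
    hence "w \<le> 0" unfolding w_def prob_k_def by (intro sum_nonpos) auto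
    thus False using w0 by simp
  qed
  have rho1: "\<rho> < 1"
  proof -
    have "1 - \<rho> = (\<Sum>Ss\<in>seqs E l. pw E q Ss * (1 - lam ?I (Tprod V E Ss)))"
      using pw_total[OF finE, of q l] unfolding \<rho>_def
      by (simp add: right_diff_distrib sum_subtractf)
    also have "\<dots> \<ge> pw E q S0 * (1 - lam ?I (Tprod V E S0))"
    proof (rule member_le_sum[where f = "\<lambda>Ss. pw E q Ss * (1 - lam ?I (Tprod V E Ss))", OF S0(1)])
      fix x assume "x \<in> seqs E l - {S0}"
      hence x: "x \<in> seqs E l" by simp
      show "0 \<le> pw E q x * (1 - lam ?I (Tprod V E x))"
        using pw_nonneg[OF x qpos] lam1[OF x] by simp
    qed (rule finite_seqs[OF finE])
    moreover have "pw E q S0 * (1 - lam ?I (Tprod V E S0)) > 0"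
      using S0 unfolding scrambling_def by simp
    ultimately show ?thesis by linarith
  qed
  define \<rho>' where "\<rho>' = max \<rho> (1/2)"
  have r'0: "0 < \<rho>'" and r'1: "\<rho>' < 1" and rr': "\<rho> \<le> \<rho>'" using rho1 by (auto simp: \<rho>'_def)
  define \<alpha> where "\<alpha> = root (8 * l) \<rho>'"
  have l8: "0 < 8 * l" using lpos by simp
  have a0: "0 < \<alpha>" unfolding \<alpha>_def using r'0 l8 by simp
  have apow: "\<alpha> ^ (8 * l) = \<rho>'" unfolding \<alpha>_def using r'0 l8 by (simp add: real_root_pow_pos2)
  have a1: "\<alpha> < 1"
  proof (rule ccontr)
    assume "\<not> \<alpha> < 1"
    hence "1 \<le> \<alpha> ^ (8 * l)" by (intro one_le_power) simp
    thus False using apow r'1 by simp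
  qed
  have b1: "\<alpha> ^ 2 < 1" using a0 a1 by (simp add: power_less_one_iff)
  have main: "\<forall>k::nat. real k \<ge> 8 * real l /
                        prob_k E q l (\<lambda>Ss. scrambling (idxset V E) (Tprod V E Ss)) \<longrightarrow>
              prob_k E q k (\<lambda>Ss. delta (idxset V E) (Tprod V E Ss) \<le> (\<alpha> ^ 2) ^ k) > 1 - \<alpha> ^ k"
  proof (intro allI impI)
    fix k :: nat
    assume hk: "8 * real l / prob_k E q l (\<lambda>Ss. scrambling ?I (Tprod V E Ss)) \<le> real k"
    have "8 * real l \<le> 8 * real l / w"
      using w0 w1 by (simp add: le_divide_eq mult_left_le)
    hence "8 * real l \<le> real k" using hk unfolding w_def by linarith
    hence k8: "8 * l \<le> k" by linarith
    define n where "n = k div l"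
    define r where "r = k mod l"
    have kn: "k = n * l + r" unfolding n_def r_def by simp
    have rl: "r < l" unfolding r_def using lpos by simp
    have nk: "4 * k \<le> 8 * l * n" using kn rl k8 by (simp add: algebra_simps)
    define P where "P = (\<lambda>Ss. delta ?I (Tprod V E Ss) \<le> (\<alpha> ^ 2) ^ k)"
    have bk: "(\<alpha> ^ 2) ^ k = \<alpha> ^ (2 * k)" by (simp add: power_mult)
    have markov: "prob_k E q k (\<lambda>Ss. \<not> P Ss) * \<alpha> ^ (2 * k)
        \<le> (\<Sum>Ss\<in>seqs E k. pw E q Ss * delta ?I (Tprod V E Ss))"
      unfolding prob_k_alt[OF finE] sum_distrib_right
    proof (rule sum_mono)
      fix Ss assume h: "Ss \<in> seqs E k"
      have p0: "0 \<le> pw E q Ss" by (rule pw_nonneg[OF h qpos])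
      have d0: "0 \<le> delta ?I (Tprod V E Ss)"
        by (rule delta_bounds(1)[OF fI Ine T_stoch[OF finV EV loops h]])
      show "(if \<not> P Ss then pw E q Ss else 0) * \<alpha> ^ (2 * k) \<le> pw E q Ss * delta ?I (Tprod V E Ss)"
      proof (cases "P Ss")
        case True thus ?thesis using p0 d0 by simp
      next
        case False
        hence "\<alpha> ^ (2 * k) \<le> delta ?I (Tprod V E Ss)" unfolding P_def bk by simp
        thus ?thesis using False p0 by (simp add: mult_left_mono)
      qed
    qed
    also have "\<dots> \<le> \<rho> ^ n" unfolding kn \<rho>_def
      by (rule Dbound[OF finV neV EV loops qpos])
    also have "\<dots> \<le> \<rho>' ^ n" by (rule power_mono[OF rr' rho0])
    also have "\<dots> = \<alpha> ^ (8 * l * n)" by (simp only: power_mult[of \<alpha> "8 * l" n] apow)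
    also have "\<dots> \<le> \<alpha> ^ (4 * k)" by (rule power_decreasing[OF nk]) (use a0 a1 in auto)
    also have "\<dots> = \<alpha> ^ (2 * k) * \<alpha> ^ (2 * k)" by (simp flip: power_add)
    finally have "prob_k E q k (\<lambda>Ss. \<not> P Ss) * \<alpha> ^ (2 * k) \<le> \<alpha> ^ (2 * k) * \<alpha> ^ (2 * k)" .
    hence pc: "prob_k E q k (\<lambda>Ss. \<not> P Ss) \<le> \<alpha> ^ (2 * k)" using a0 by simp
    have "k \<ge> 1" using k8 lpos by simp
    hence "\<alpha> ^ (2 * k) < \<alpha> ^ k" using a0 a1 by (intro power_strict_decreasing) auto
    hence "prob_k E q k P > 1 - \<alpha> ^ k" using pc prob_compl[OF finE, of q k P] by simp
    thus "prob_k E q k (\<lambda>Ss. delta ?I (Tprod V E Ss) \<le> (\<alpha> ^ 2) ^ k) > 1 - \<alpha> ^ k"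
      unfolding P_def .
  qed
  have "0 \<le> \<alpha> ^ 2" by simp
  with a0 a1 b1 main show ?thesis by blast
qed


end
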